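(* Let $n \geq 1$ and let $D_m'$ (for $m \ge 1$) be the digraphs defined in the context. Then $D_n'$ has no induced directed cycle of odd length at least $5$, $\omega(D_n') \leq 3$, and $\vec{\chi}(D_{4n}') \geq n$.
   Context: Digraphs $D_m$ are defined recursively. $D_1$ is a single vertex with no edges. For $m \geq 2$, take $m-1$ disjoint copies $D_{m-1}^1,\dots,D_{m-1}^{m-1}$ of $D_{m-1}$; let $\mathcal{T}$ be the set of all sequences $T=(x_1,\dots,x_{m-1})$ with $x_i \in V(D_{m-1}^i)$ for each $i$. For each $T \in \mathcal{T}$ add a new vertex $v_T$ and, for each $i \in \{1,\dots,m-1\}$, an edge from $x_i$ to $v_T$. The resulting digraph is $D_m$. It is a known fact that $D_m$ is acyclic and that for any two vertices $u,v$ of $D_m$ there is at most one directed path from $u$ to $v$ in $D_m$. The length of a path is its number of edges. The digraph $D_m'$ has $V(D_m')=V(D_m)$ and, for every ordered pair $(u,v)$ of vertices such that there is a directed path in $D_m$ from $u$ to $v$: if that path has length $\equiv 1 \pmod 3$, $D_m'$ has the edge $uv$; if that path has length $\equiv 2 \pmod 3$, $D_m'$ has the edge $vu$. $D_m'$ has no other edges. The clique number $\omega(D)$ of a digraph is the clique number of its underlying undirected graph (same vertices, $u,v$ adjacent iff $uv$ or $vu$ is an edge). A digraph is acyclic if it has no directed cycle; $\vec{\chi}(D)$, the dichromatic number, is the least $k$ such that $V(D)$ can be partitioned into $k$ sets each inducing an acyclic subdigraph. An induced directed cycle is a directed cycle $v_1\cdots v_\ell v_1$ whose vertex set induces exactly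 the edges $v_iv_{i+1}$ (indices mod $\ell$). *)

theory Defs
  imports Main
begin

text \<open>Base is the unique vertex of D_1;
  Copy i x is vertex x of the i-th copy (0-based) of D_(m-1) inside D_m;
  New T is the new vertex v_T for the sequence T = (x_1,...,x_(m-1)).\<close>
datatype vtx = Base | Copy nat vtx | New "vtx list"

fun dV :: "nat \<Rightarrow> vtx set" where
  "dV 0 = {}"
| "dV (Suc 0) = {Base}"
| "dV (Suc (Suc k)) =
     {Copy i x | i x. i < Suc k \<and> x \<in> dV (Suc k)}
   \<union> {New xs | xs. length xs = Suc k \<and> (\<forall>i < Suc k. xs ! i \<in> dV (Suc k))}"

fun dE :: "nat \<Rightarrow> (vtx \<times> vtx) set" where
  "dE 0 = {}"
| "dE (Suc 0) = {}"
| "dE (Suc (Suc k)) =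
     {(Copy i x, Copy i y) | i x y. i < Suc k \<and> (x, y) \<in> dE (Suc k)}
   \<union> {(Copy i (xs ! i), New xs) | i xs. i < Suc k \<and> length xs = Suc k
         \<and> (\<forall>j < Suc k. xs ! j \<in> dV (Suc k))}"

text \<open>Directed path of length L from u to v in D_m (D_m is acyclic, so walks are paths).\<close>
definition dpath :: "nat \<Rightarrow> nat \<Rightarrow> vtx \<Rightarrow> vtx \<Rightarrow> bool" where
  "dpath m L u v \<longleftrightarrow> (u, v) \<in> dE m ^^ L"

definition dE' :: "nat \<Rightarrow> (vtx \<times> vtx) set" where
  "dE' m = {(u, v) | u v L. dpath m L u v \<and> L mod 3 = 1}
         \<union> {(v, u) | u v L. dpath m L u v \<and> L mod 3 = 2}"

definition adjacent :: "(vtx \<times> vtx) set \<Rightarrow> vtx \<Rightarrow> vtx \<Rightarrow> bool" where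
  "adjacent E u v \<longleftrightarrow> (u, v) \<in> E \<or> (v, u) \<in> E"

definition is_clique :: "vtx set \<Rightarrow> (vtx \<times> vtx) set \<Rightarrow> vtx set \<Rightarrow> bool" where
  "is_clique V E K \<longleftrightarrow> K \<subseteq> V \<and> (\<forall>u\<in>K. \<forall>v\<in>K. u \<noteq> v \<longrightarrow> adjacent E u v)"

definition clique_number :: "vtx set \<Rightarrow> (vtx \<times> vtx) set \<Rightarrow> nat" where
  "clique_number V E = Max {card K | K. is_clique V E K}"

definition induced_dcycle :: "vtx set \<Rightarrow> (vtx \<times> vtx) set \<Rightarrow> vtx list \<Rightarrow> bool" where
  "induced_dcycle V E vs \<longleftrightarrow> length vs \<ge> 2 \<and> distinct vs \<and> set vs \<subseteq> V \<and>
     (\<forall>i < length vs. \<forall>j < length vs.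
        (vs ! i, vs ! j) \<in> E \<longleftrightarrow> j = (i + 1) mod length vs)"

definition acyclic_colourable :: "vtx set \<Rightarrow> (vtx \<times> vtx) set \<Rightarrow> nat \<Rightarrow> bool" where
  "acyclic_colourable V E k \<longleftrightarrow>
     (\<exists>f. (\<forall>v\<in>V. f v < k) \<and>
          (\<forall>c < k. acyclic (E \<inter> ({v \<in> V. f v = c} \<times> {v \<in> V. f v = c}))))"

definition dichromatic_number :: "vtx set \<Rightarrow> (vtx \<times> vtx) set \<Rightarrow> nat" where
  "dichromatic_number V E = (LEAST k. acyclic_colourable V E k)"

end

theory Submission
  imports Defs
begin

lemma dE_SS: "(u,v) \<in> dE (Suc (Suc k)) \<longleftrightarrow>
  (\<exists>i x y. u = Copy i x \<and> v = Copy i y \<and> i < Suc k \<and> (x,y) \<in> dE (Suc k)) \<or>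
  (\<exists>i xs. u = Copy i (xs!i) \<and> v = New xs \<and> i < Suc k \<and> length xs = Suc k \<and> (\<forall>j<Suc k. xs!j \<in> dV (Suc k)))"
  by auto

lemma dE_in_dV: "(u,v) \<in> dE m \<Longrightarrow> u \<in> dV m \<and> v \<in> dV m"
proof (induction m arbitrary: u v rule: dV.induct)
  case 1 then show ?case by simp
next
  case 2 then show ?case by simp
next
  case (3 k)
  from "3.prems"[unfolded dE_SS] show ?case
  proof
    assume "\<exists>i x y. u = Copy i x \<and> v = Copy i y \<and> i < Suc k \<and> (x,y) \<in> dE (Suc k)"
    then obtain i x y where "u = Copy i x" "v = Copy i y" "i < Suc k" "(x,y) \<in> dE (Suc k)" by blast
    with "3.IH" show ?thesis by auto
  next
    assume "\<exists>i xs. u = Copy i (xs!i) \<and> v = New xs \<and> i < Suc k \<and> length xs = Suc k \<and> (\<forall>j<Suc k. xs!j \<in> dV (Suc k))"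
    then obtain i xs where "u = Copy i (xs!i)" "v = New xs" "i < Suc k" "length xs = Suc k" "\<forall>j<Suc k. xs!j \<in> dV (Suc k)" by blast
    then show ?thesis by auto
  qed
qed

lemma relpow_noout: assumes "\<And>w. (u,w) \<notin> E" "(u,v) \<in> E ^^ L" shows "L = 0 \<and> v = u"
proof (cases L)
  case 0 then show ?thesis using assms by simp
next
  case (Suc L') then show ?thesis using assms(1) relpow_Suc_D2[OF assms(2)[unfolded Suc]] by blast
qed

lemma copy_path: "(Copy i x, v) \<in> dE (Suc (Suc k)) ^^ L \<Longrightarrow>
  (\<exists>y. v = Copy i y \<and> (x,y) \<in> dE (Suc k) ^^ L) \<or>
  (\<exists>xs L0. v = New xs \<and> L = Suc L0 \<and> (x, xs!i) \<in> dE (Suc k) ^^ L0)"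
proof (induction L arbitrary: v)
  case 0 then show ?case by simp
next
  case (Suc L)
  from Suc.prems obtain w where w1: "(Copy i x, w) \<in> dE (Suc (Suc k)) ^^ L"
    and w2: "(w, v) \<in> dE (Suc (Suc k))" by auto
  from Suc.IH[OF w1] show ?case
  proof
    assume "\<exists>y. w = Copy i y \<and> (x,y) \<in> dE (Suc k) ^^ L"
    then obtain y where y: "w = Copy i y" "(x,y) \<in> dE (Suc k) ^^ L" by blast
    from w2[unfolded y(1) dE_SS] show ?thesis
    proof
      assume "\<exists>i' x' y'. Copy i y = Copy i' x' \<and> v = Copy i' y' \<and> i' < Suc k \<and> (x',y') \<in> dE (Suc k)"
      then obtain y' where "v = Copy i y'" "(y,y') \<in> dE (Suc k)" by blast
      with y(2) show ?thesis by auto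
    next
      assume "\<exists>i' xs. Copy i y = Copy i' (xs!i') \<and> v = New xs \<and> i' < Suc k \<and> length xs = Suc k \<and> (\<forall>j<Suc k. xs!j \<in> dV (Suc k))"
      then obtain xs where "v = New xs" "y = xs!i" by blast
      with y(2) show ?thesis by auto
    qed
  next
    assume "\<exists>xs L0. w = New xs \<and> L = Suc L0 \<and> (x, xs!i) \<in> dE (Suc k) ^^ L0"
    then obtain xs where "w = New xs" by blast
    with w2 show ?thesis by (simp add: dE_SS)
  qed
qed

lemma len_unique: "(u,v) \<in> dE m ^^ L \<Longrightarrow> (u,v) \<in> dE m ^^ L' \<Longrightarrow> L = L'"
proof (induction m arbitrary: u v L L' rule: dV.induct)
  case 1 then show ?case using relpow_noout[of u "dE 0"] by auto
next
  case 2 then show ?case using relpow_noout[of u "dE (Suc 0)"] by auto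
next
  case (3 k)
  show ?case
  proof (cases u)
    case Base
    then have "\<And>w. (u,w) \<notin> dE (Suc (Suc k))" by (simp add: dE_SS)
    then show ?thesis using relpow_noout "3.prems" by metis
  next
    case (New xs)
    then have "\<And>w. (u,w) \<notin> dE (Suc (Suc k))" by (simp add: dE_SS)
    then show ?thesis using relpow_noout "3.prems" by metis
  next
    case (Copy i x)
    note A = copy_path[OF "3.prems"(1)[unfolded Copy]]
    note B = copy_path[OF "3.prems"(2)[unfolded Copy]]
    show ?thesis
    proof (cases v)
      case Base then show ?thesis using A by auto
    next
      case (Copy j y)
      then show ?thesis using A B "3.IH" by auto
    next
      case (New xs)
      then show ?thesis using A B "3.IH" by auto
    qed
  qed
qed

lemma dpath_add: "dpath m L1 a b \<Longrightarrow> dpath m L2 b c \<Longrightarrow> dpath m (L1+L2) a c"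
  unfolding dpath_def by (auto simp: relpow_add)

lemma dpath_unique: "dpath m L u v \<Longrightarrow> dpath m L' u v \<Longrightarrow> L = L'"
  unfolding dpath_def by (rule len_unique)

lemma dpath_0: "dpath m 0 u v \<longleftrightarrow> u = v"
  unfolding dpath_def by auto

lemma dpath_acyc: "dpath m L x x \<Longrightarrow> L = 0"
  using dpath_unique[of m L x x 0] dpath_0 by auto

definition up :: "nat \<Rightarrow> vtx \<Rightarrow> vtx \<Rightarrow> bool" where
  "up m a b \<longleftrightarrow> (\<exists>L. dpath m L a b \<and> L mod 3 = 1)"

lemma dE'_iff: "(a,b) \<in> dE' m \<longleftrightarrow> up m a b \<or> (\<exists>L. dpath m L b a \<and> L mod 3 = 2)"
  unfolding dE'_def up_def by blast

lemma local_alt: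
  assumes "(a,b) \<in> dE' m" "(b,c) \<in> dE' m" "(c,a) \<notin> dE' m"
  shows "up m b c \<longleftrightarrow> \<not> up m a b"
proof
  assume ub: "up m b c"
  show "\<not> up m a b"
  proof
    assume "up m a b"
    then obtain L1 where 1: "dpath m L1 a b" "L1 mod 3 = 1" unfolding up_def by blast
    from ub obtain L2 where 2: "dpath m L2 b c" "L2 mod 3 = 1" unfolding up_def by blast
    have "dpath m (L1+L2) a c" using 1 2 dpath_add by blast
    moreover have "(L1+L2) mod 3 = 2" using 1 2 by presburger
    ultimately have "(c,a) \<in> dE' m" unfolding dE'_iff by blast
    with assms(3) show False by simp
  qed
next
  assume nu: "\<not> up m a b"
  show "up m b c"
  proof (rule ccontr)
    assume nc: "\<not> up m b c"
    from assms(1) nu obtain L1 where 1: "dpath m L1 b a" "L1 mod 3 = 2" unfolding dE'_iff by blast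
    from assms(2) nc obtain L2 where 2: "dpath m L2 c b" "L2 mod 3 = 2" unfolding dE'_iff by blast
    have "dpath m (L2+L1) c a" using 1 2 dpath_add by blast
    moreover have "(L2+L1) mod 3 = 1" using 1 2 by presburger
    ultimately have "(c,a) \<in> dE' m" unfolding dE'_iff up_def by blast
    with assms(3) show False by simp
  qed
qed

lemma no_odd_cycle:
  assumes ind: "induced_dcycle V (dE' m) vs" and od: "odd (length vs)" and l5: "length vs \<ge> 5"
  shows False
proof -
  define l where "l = length vs"
  have l5': "l \<ge> 5" using l5 l_def by simp
  have E: "\<And>i j. i < l \<Longrightarrow> j < l \<Longrightarrow> (vs!i, vs!j) \<in> dE' m \<longleftrightarrow> j = (i+1) mod l"
    using ind unfolding induced_dcycle_def l_def by blast
  define U where "U k = up m (vs!k) (vs!((k+1) mod l))" for k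
  have step: "U (Suc k) \<longleftrightarrow> \<not> U k" if k: "Suc k < l" for k
  proof -
    have m1: "(k+1) mod l = Suc k" using k by simp
    have ab: "(vs!k, vs!(Suc k)) \<in> dE' m" using E[of k "Suc k"] k m1 by simp
    have lt: "(Suc k + 1) mod l < l" using l5' by simp
    have bc: "(vs!(Suc k), vs!((Suc k+1) mod l)) \<in> dE' m" using E[of "Suc k" "(Suc k + 1) mod l"] k lt by simp
    have ne: "k \<noteq> ((Suc k + 1) mod l + 1) mod l"
    proof (cases "Suc (Suc k) < l")
      case True
      then have a: "(Suc k + 1) mod l = Suc (Suc k)" by simp
      show ?thesis
      proof (cases "Suc (Suc (Suc k)) < l")
        case True then show ?thesis using a by simp
      next
        case False
        then have "Suc (Suc (Suc k)) = l" using \<open>Suc (Suc k) < l\<close> by simp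
        then show ?thesis using a l5' by auto
      qed
    next
      case False
      then have "Suc (Suc k) = l" using k by simp
      then have a: "(Suc k + 1) mod l = 0" by simp
      then show ?thesis using l5' \<open>Suc (Suc k) = l\<close> by auto
    qed
    have ca: "(vs!((Suc k+1) mod l), vs!k) \<notin> dE' m" using E[of "(Suc k + 1) mod l" k] k lt ne by simp
    show ?thesis using local_alt[OF ab bc ca] unfolding U_def m1 by simp
  qed
  have wrap: "U 0 \<longleftrightarrow> \<not> U (l - 1)"
  proof -
    have i1: "(l - 1 + 1) mod l = 0" using l5' by simp
    have ab: "(vs!(l-1), vs!0) \<in> dE' m" using E[of "l-1" 0] l5' i1 by simp
    have bc: "(vs!0, vs!1) \<in> dE' m" using E[of 0 1] l5' by simp
    have ca: "(vs!1, vs!(l-1)) \<notin> dE' m" using E[of 1 "l-1"] l5' by simp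
    show ?thesis using local_alt[OF ab bc ca] unfolding U_def i1 using l5' by simp
  qed
  have alt: "k < l \<Longrightarrow> (U k \<longleftrightarrow> (U 0 \<longleftrightarrow> even k))" for k
  proof (induction k)
    case 0 then show ?case by simp
  next
    case (Suc k) then show ?case using step[of k] by auto
  qed
  have "even (l - 1)" using od l_def l5' by simp
  then have "U (l - 1) \<longleftrightarrow> U 0" using alt[of "l-1"] l5' by simp
  with wrap show False by simp
qed

definition sd :: "nat \<Rightarrow> vtx \<Rightarrow> vtx \<Rightarrow> int \<Rightarrow> bool" where
  "sd m x y D \<longleftrightarrow> (D \<ge> 0 \<and> dpath m (nat D) x y) \<or> (D < 0 \<and> dpath m (nat (-D)) y x)"

lemma sd_unique: assumes "sd m x y D1" "sd m x y D2" shows "D1 = D2"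
proof -
  { fix A B assume a: "A \<ge> 0" "dpath m (nat A) x y" and b: "B < 0" "dpath m (nat (-B)) y x"
    have "dpath m (nat A + nat (-B)) x x" using a b dpath_add by blast
    then have "nat A + nat (-B) = 0" by (rule dpath_acyc)
    with b have False by simp }
  note X = this
  show ?thesis using assms unfolding sd_def
    by (metis X dpath_unique eq_nat_nat_iff neg_0_le_iff_le less_le_not_le minus_equation_iff)
qed

lemma sd_swap: "sd m x y D \<Longrightarrow> sd m y x (-D)"
  unfolding sd_def using dpath_0 by (cases "D = 0") auto

lemma sd_triple:
  assumes 1: "sd m x y D1" and 2: "sd m y z D2" and 3: "sd m x z D3"
  shows "D3 = D1 + D2"
proof -
  consider "D1 \<ge> 0" "D2 \<ge> 0" | "D1 < 0" "D2 < 0" | "D1 \<ge> 0" "D2 < 0" "D3 \<ge> 0"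
    | "D1 \<ge> 0" "D2 < 0" "D3 < 0" | "D1 < 0" "D2 \<ge> 0" "D3 \<ge> 0" | "D1 < 0" "D2 \<ge> 0" "D3 < 0"
    by linarith
  then show ?thesis
  proof cases
    case 1
    then have "dpath m (nat D1 + nat D2) x z" using assms dpath_add unfolding sd_def by auto
    then have "sd m x z (D1 + D2)" using 1 unfolding sd_def by (simp add: nat_add_distrib)
    then show ?thesis using sd_unique 3 by blast
  next
    case 2
    then have "dpath m (nat (-D2) + nat (-D1)) z x" using assms dpath_add unfolding sd_def by auto
    moreover have "nat (-D2) + nat (-D1) = nat (-(D1+D2))" using 2 by simp
    ultimately have "sd m x z (D1 + D2)" using 2 unfolding sd_def by simp
    then show ?thesis using sd_unique 3 by blast
  next
    case 3
    then have "dpath m (nat D3 + nat (-D2)) x y" "dpath m (nat D1) x y"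
      using assms dpath_add unfolding sd_def by auto
    then have "nat D3 + nat (-D2) = nat D1" using dpath_unique by blast
    then show ?thesis using 3 by linarith
  next
    case 4
    then have "dpath m (nat (-D3) + nat D1) z y" "dpath m (nat (-D2)) z y"
      using assms dpath_add unfolding sd_def by auto
    then have "nat (-D3) + nat D1 = nat (-D2)" using dpath_unique by blast
    then show ?thesis using 4 by linarith
  next
    case 5
    then have "dpath m (nat (-D1) + nat D3) y z" "dpath m (nat D2) y z"
      using assms dpath_add unfolding sd_def by auto
    then have "nat (-D1) + nat D3 = nat D2" using dpath_unique by blast
    then show ?thesis using 5 by linarith
  next
    case 6
    then have "dpath m (nat D2 + nat (-D3)) y x" "dpath m (nat (-D1)) y x"
      using assms dpath_add unfolding sd_def by auto
    then have "nat D2 + nat (-D3) = nat (-D1)" using dpath_unique by blast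
    then show ?thesis using 6 by linarith
  qed
qed

lemma edge_sd: assumes "(u,v) \<in> dE' m" shows "\<exists>D. sd m u v D \<and> D mod 3 \<noteq> 0"
  using assms unfolding dE'_iff
proof
  assume "up m u v"
  then obtain L where L: "dpath m L u v" "L mod 3 = 1" unfolding up_def by blast
  then have "sd m u v (int L)" unfolding sd_def by simp
  moreover have "int L mod 3 \<noteq> 0" using L(2) by presburger
  ultimately show ?thesis by blast
next
  assume "\<exists>L. dpath m L v u \<and> L mod 3 = 2"
  then obtain L where L: "dpath m L v u" "L mod 3 = 2" by blast
  then have "L > 0" by (cases L) auto
  then have "sd m u v (- int L)" using L unfolding sd_def by simp
  moreover have "(- int L) mod 3 \<noteq> 0" using L(2) by presburger
  ultimately show ?thesis by blast
qed

lemma adj_sd: assumes "adjacent (dE' m) u v" shows "\<exists>D. sd m u v D \<and> D mod 3 \<noteq> 0"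
proof -
  from assms consider "(u,v) \<in> dE' m" | "(v,u) \<in> dE' m" unfolding adjacent_def by blast
  then show ?thesis
  proof cases
    case 1 then show ?thesis using edge_sd by blast
  next
    case 2
    then obtain D where "sd m v u D" "D mod 3 \<noteq> 0" using edge_sd by blast
    then have "sd m u v (-D)" "(-D) mod 3 \<noteq> 0" using sd_swap[of m v u D] by (simp, presburger)
    then show ?thesis by blast
  qed
qed

lemma no_4clique:
  assumes "is_clique V (dE' m) K" "a \<in> K" "b \<in> K" "c \<in> K" "d \<in> K"
    "a \<noteq> b" "a \<noteq> c" "a \<noteq> d" "b \<noteq> c" "b \<noteq> d" "c \<noteq> d"
  shows False
proof -
  have adj: "\<And>u v. u \<in> K \<Longrightarrow> v \<in> K \<Longrightarrow> u \<noteq> v \<Longrightarrow> \<exists>D. sd m u v D \<and> D mod 3 \<noteq> 0"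
    using assms(1) adj_sd unfolding is_clique_def by blast
  obtain Dab where ab: "sd m a b Dab" "Dab mod 3 \<noteq> 0" using adj assms by blast
  obtain Dac where ac: "sd m a c Dac" "Dac mod 3 \<noteq> 0" using adj assms by blast
  obtain Dad where ad: "sd m a d Dad" "Dad mod 3 \<noteq> 0" using adj assms by blast
  obtain Dbc where bc: "sd m b c Dbc" "Dbc mod 3 \<noteq> 0" using adj assms by blast
  obtain Dbd where bd: "sd m b d Dbd" "Dbd mod 3 \<noteq> 0" using adj assms by blast
  obtain Dcd where cd: "sd m c d Dcd" "Dcd mod 3 \<noteq> 0" using adj assms by blast
  have "Dbc = -Dab + Dac" using sd_triple[OF sd_swap[OF ab(1)] ac(1) bc(1)] .
  moreover have "Dbd = -Dab + Dad" using sd_triple[OF sd_swap[OF ab(1)] ad(1) bd(1)] .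
  moreover have "Dcd = -Dac + Dad" using sd_triple[OF sd_swap[OF ac(1)] ad(1) cd(1)] .
  ultimately show False using ab(2) ac(2) ad(2) bc(2) bd(2) cd(2) by presburger
qed

lemma clique_card: assumes "is_clique V (dE' m) K" shows "card K \<le> 3"
proof (rule ccontr)
  assume "\<not> card K \<le> 3"
  then have "Suc 3 \<le> card K" by simp
  then obtain a B where B: "K = insert a B" "a \<notin> B" "3 \<le> card B" "finite B"
    unfolding card_le_Suc_iff by blast
  then have "Suc 2 \<le> card B" by simp
  then obtain b C where C: "B = insert b C" "b \<notin> C" "2 \<le> card C" "finite C"
    unfolding card_le_Suc_iff by blast
  then have "Suc 1 \<le> card C" by simp
  then obtain c D where D: "C = insert c D" "c \<notin> D" "1 \<le> card D" "finite D"
    unfolding card_le_Suc_iff by blast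
  then have "Suc 0 \<le> card D" by simp
  then obtain d F where F: "D = insert d F" "d \<notin> F"
    unfolding card_le_Suc_iff by blast
  show False using no_4clique[OF assms, of a b c d] B C D F by auto
qed

lemma clique_number_le: "clique_number V (dE' m) \<le> 3"
proof -
  let ?S = "{card K | K. is_clique V (dE' m) K}"
  have sub: "?S \<subseteq> {..3}" using clique_card by auto
  have "is_clique V (dE' m) {}" unfolding is_clique_def by simp
  then have "?S \<noteq> {}" by blast
  then show ?thesis unfolding clique_number_def using sub finite_subset[OF sub]
    by (subst Max_le_iff) auto
qed

lemma zykov:
  assumes "\<And>u v. (u,v) \<in> dE m \<Longrightarrow> g u \<noteq> g v" "\<And>v. v \<in> dV m \<Longrightarrow> g v < c"
  shows "m \<le> c"
  using assms
proof (induction m arbitrary: g c rule: dV.induct)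
  case 1 then show ?case by simp
next
  case 2
  have "g Base < c" using 2(2) by simp
  then show ?case by simp
next
  case (3 k)
  have cpE: "\<And>i x y. i < Suc k \<Longrightarrow> (x,y) \<in> dE (Suc k) \<Longrightarrow> (Copy i x, Copy i y) \<in> dE (Suc (Suc k))"
    by (simp add: dE_SS)
  have cpV: "\<And>i x. i < Suc k \<Longrightarrow> x \<in> dV (Suc k) \<Longrightarrow> Copy i x \<in> dV (Suc (Suc k))" by simp
  have ge: "Suc k \<le> c"
    using "3.IH"[where g="\<lambda>x. g (Copy 0 x)" and c=c] "3.prems" cpE cpV by blast
  show ?case
  proof (rule ccontr)
    assume "\<not> Suc (Suc k) \<le> c"
    with ge have c: "c = Suc k" by simp
    have all: "\<exists>x \<in> dV (Suc k). g (Copy i x) = s" if i: "i < Suc k" and s: "s < Suc k" for i s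
    proof (rule ccontr)
      assume miss: "\<not> (\<exists>x \<in> dV (Suc k). g (Copy i x) = s)"
      define g' where "g' x = (if g (Copy i x) > s then g (Copy i x) - 1 else g (Copy i x))" for x
      have "Suc k \<le> k"
      proof (rule "3.IH"[where g=g' and c=k])
        fix x y assume "(x,y) \<in> dE (Suc k)"
        then have "g (Copy i x) \<noteq> g (Copy i y)" "x \<in> dV (Suc k)" "y \<in> dV (Suc k)"
          using "3.prems"(1) cpE i dE_in_dV by blast+
        then show "g' x \<noteq> g' y" using miss unfolding g'_def by auto
      next
        fix x assume "x \<in> dV (Suc k)"
        then have "g (Copy i x) < Suc k" "g (Copy i x) \<noteq> s" using "3.prems"(2) cpV i c miss by auto
        then show "g' x < k" unfolding g'_def using s by auto
      qed
      then show False by simp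
    qed
    define xs where "xs = map (\<lambda>i. SOME x. x \<in> dV (Suc k) \<and> g (Copy i x) = i) [0..<Suc k]"
    have xs: "xs!i \<in> dV (Suc k) \<and> g (Copy i (xs!i)) = i" if "i < Suc k" for i
    proof -
      have "xs!i = (SOME x. x \<in> dV (Suc k) \<and> g (Copy i x) = i)" using that unfolding xs_def
        by (simp del: upt_Suc)
      then show ?thesis using someI_ex[OF all[OF that that, unfolded Bex_def]] by simp
    qed
    have len: "length xs = Suc k" unfolding xs_def by simp
    have NV: "New xs \<in> dV (Suc (Suc k))" using xs len by auto
    then have gN: "g (New xs) < Suc k" using "3.prems"(2) c by blast
    have "(Copy (g (New xs)) (xs ! g (New xs)), New xs) \<in> dE (Suc (Suc k))"
      using gN xs len by (auto simp: dE_SS)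
    then have "g (Copy (g (New xs)) (xs ! g (New xs))) \<noteq> g (New xs)" using "3.prems"(1) by blast
    then show False using xs[OF gN] by simp
  qed
qed

primrec hh :: "vtx \<Rightarrow> nat" where
  "hh Base = 0"
| "hh (Copy i x) = hh x"
| "hh (New xs) = Suc (sum_list (map hh xs))"

lemma hh_edge: "(u,v) \<in> dE m \<Longrightarrow> hh u < hh v"
proof (induction m arbitrary: u v rule: dV.induct)
  case 1 then show ?case by simp
next
  case 2 then show ?case by simp
next
  case (3 k)
  from "3.prems"[unfolded dE_SS] show ?case
  proof
    assume "\<exists>i x y. u = Copy i x \<and> v = Copy i y \<and> i < Suc k \<and> (x,y) \<in> dE (Suc k)"
    then show ?thesis using "3.IH" by auto
  next
    assume "\<exists>i xs. u = Copy i (xs!i) \<and> v = New xs \<and> i < Suc k \<and> length xs = Suc k \<and> (\<forall>j<Suc k. xs!j \<in> dV (Suc k))"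
    then obtain i xs where "u = Copy i (xs!i)" "v = New xs" "i < length xs" by auto
    moreover have "hh (xs!i) \<le> sum_list (map hh xs)" if "i < length xs" for i
      using that elem_le_sum_list[of i "map hh xs"] by simp
    ultimately show ?thesis by (simp add: le_imp_less_Suc)
  qed
qed

lemma hh_path: "(u,v) \<in> dE m ^^ Suc L \<Longrightarrow> hh u < hh v"
proof (induction L arbitrary: v)
  case 0 then show ?case using hh_edge by auto
next
  case (Suc L)
  then obtain w where "(u,w) \<in> dE m ^^ Suc L" "(w,v) \<in> dE m" by (metis relpow_Suc_E)
  then show ?case using Suc.IH hh_edge less_trans by blast
qed

lemma hh_dE': "(u,v) \<in> dE' m \<Longrightarrow> hh u \<noteq> hh v"
proof -
  assume "(u,v) \<in> dE' m"
  then consider L where "dpath m L u v" "L mod 3 = 1" | L where "dpath m L v u" "L mod 3 = 2"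
    unfolding dE'_iff up_def by blast
  then show ?thesis
  proof cases
    case 1
    then obtain L' where "(u,v) \<in> dE m ^^ Suc L'" unfolding dpath_def by (cases L) auto
    then show ?thesis using hh_path by fastforce
  next
    case 2
    then obtain L' where "(v,u) \<in> dE m ^^ Suc L'" unfolding dpath_def by (cases L) auto
    then show ?thesis using hh_path by fastforce
  qed
qed

lemma hh_bound: "\<exists>B. \<forall>v \<in> dV m. hh v \<le> B"
proof (induction m rule: dV.induct)
  case 1 then show ?case by simp
next
  case 2 then show ?case by simp
next
  case (3 k)
  then obtain B where B: "\<forall>v \<in> dV (Suc k). hh v \<le> B" by blast
  have "\<forall>v \<in> dV (Suc (Suc k)). hh v \<le> Suc (Suc k * B)"
  proof
    fix v assume "v \<in> dV (Suc (Suc k))"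
    then consider i x where "v = Copy i x" "x \<in> dV (Suc k)"
      | xs where "v = New xs" "length xs = Suc k" "\<forall>i<Suc k. xs!i \<in> dV (Suc k)" by auto
    then show "hh v \<le> Suc (Suc k * B)"
    proof cases
      case 1
      then have "hh x \<le> B" using B by auto
      then show ?thesis using 1 by simp
    next
      case 2
      have "sum_list (map hh xs) \<le> sum_list (map (\<lambda>_. B) xs)"
        apply (rule sum_list_mono) using 2 B by (metis in_set_conv_nth)
      also have "\<dots> = Suc k * B" using 2 by (simp add: sum_list_triv)
      finally show ?thesis using 2 by simp
    qed
  qed
  then show ?case by blast
qed

lemma colourable_exists: "\<exists>k. acyclic_colourable (dV m) (dE' m) k"
proof -
  obtain B where B: "\<forall>v \<in> dV m. hh v \<le> B" using hh_bound by blast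
  have "acyclic_colourable (dV m) (dE' m) (Suc B)"
    unfolding acyclic_colourable_def
  proof (intro exI[of _ hh] conjI allI impI)
    show "\<forall>v\<in>dV m. hh v < Suc B" using B by auto
  next
    fix c
    have "dE' m \<inter> ({v \<in> dV m. hh v = c} \<times> {v \<in> dV m. hh v = c}) = {}" by (auto dest: hh_dE')
    then show "acyclic (dE' m \<inter> ({v \<in> dV m. hh v = c} \<times> {v \<in> dV m. hh v = c}))" by (simp add: acyclic_def)
  qed
  then show ?thesis by blast
qed

lemma colourable_bound:
  assumes "acyclic_colourable (dV m) (dE' m) k" shows "m \<le> 2 * k"
proof -
  obtain f where f: "\<forall>v\<in>dV m. f v < k"
    "\<forall>c<k. acyclic (dE' m \<inter> ({v \<in> dV m. f v = c} \<times> {v \<in> dV m. f v = c}))"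
    using assms unfolding acyclic_colourable_def by blast
  define g where "g v = 2 * f v + (if \<exists>w. (w,v) \<in> dE m \<and> f w = f v then 1 else 0)" for v
  show ?thesis
  proof (rule zykov[where g=g])
    fix v assume "v \<in> dV m"
    then have "f v < k" using f by blast
    then show "g v < 2 * k" unfolding g_def by auto
  next
    fix u v assume uv: "(u,v) \<in> dE m"
    then have uvV: "u \<in> dV m" "v \<in> dV m" using dE_in_dV by blast+
    show "g u \<noteq> g v"
    proof (cases "f u = f v")
      case False then show ?thesis unfolding g_def by auto
    next
      case True
      have nw: "\<not> (\<exists>w. (w,u) \<in> dE m \<and> f w = f u)"
      proof
        assume "\<exists>w. (w,u) \<in> dE m \<and> f w = f u"
        then obtain w where w: "(w,u) \<in> dE m" "f w = f u" by blast
        then have wV: "w \<in> dV m" using dE_in_dV by blast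
        define C where "C = {x \<in> dV m. f x = f u}"
        define R where "R = dE' m \<inter> (C \<times> C)"
        have inC: "w \<in> C" "u \<in> C" "v \<in> C" using wV uvV w True unfolding C_def by auto
        have d1: "dpath m 1 w u" "dpath m 1 u v" using w uv unfolding dpath_def by auto
        have d2: "dpath m 2 w v" using dpath_add[OF d1] by (simp add: numeral_2_eq_2)
        have "(w,u) \<in> dE' m" "(u,v) \<in> dE' m" "(v,w) \<in> dE' m"
          using d1 d2 unfolding dE'_def by fastforce+
        then have "(w,u) \<in> R" "(u,v) \<in> R" "(v,w) \<in> R" using inC unfolding R_def by auto
        then have "(w,w) \<in> R\<^sup>+" by (meson trancl.simps)
        moreover have "acyclic R" unfolding R_def C_def using f uvV by blast
        ultimately show False unfolding acyclic_def by blast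
      qed
      have "\<exists>w. (w,v) \<in> dE m \<and> f w = f v" using uv True by blast
      then show ?thesis using nw True unfolding g_def by auto
    qed
  qed
qed

theorem mainTheorem6:
  fixes n :: nat
  assumes "n \<ge> 1"
  shows "(\<forall>vs. odd (length vs) \<and> length vs \<ge> 5 \<longrightarrow> \<not> induced_dcycle (dV n) (dE' n) vs)
       \<and> clique_number (dV n) (dE' n) \<le> 3
       \<and> dichromatic_number (dV (4 * n)) (dE' (4 * n)) \<ge> n"
proof (intro conjI allI impI)
  fix vs :: "vtx list" assume "odd (length vs) \<and> length vs \<ge> 5"
  then show "\<not> induced_dcycle (dV n) (dE' n) vs" using no_odd_cycle by blast
next
  show "clique_number (dV n) (dE' n) \<le> 3" by (rule clique_number_le)
next
  let ?P = "acyclic_colourable (dV (4 * n)) (dE' (4 * n))"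
  have "?P (Least ?P)" using LeastI_ex colourable_exists by blast
  then have "4 * n \<le> 2 * Least ?P" by (rule colourable_bound)
  then show "dichromatic_number (dV (4 * n)) (dE' (4 * n)) \<ge> n"
    unfolding dichromatic_number_def by linarith
qed

end
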